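(* Let $\{x_i,v_i\}_{i\in[N]}$ be the global solution of the delayed Cucker–Smale system described in the context, and let $\beta>0$ satisfy $2\beta e^{-2\tau}-4\tau-\beta\ge0$. Define \[ G(t):=d_v(t)+\beta\int_{\max\{0,t-2\tau\}}^t e^{-(t-s)}\int_s^t\max_{i\in[N]}|\dot v_i(r)|\,\mathrm dr\,\mathrm ds,\qquad t\ge0. \] Then for almost all $t>2\tau$, \[ \frac{\mathrm d}{\mathrm dt}G(t)\le4\int_{t-\tau}^tG(s-\tau)\,\mathrm ds-(N-1)\underline a(t)G(t)+\beta(1-e^{-2\tau})G(t-\tau), \] where $\underline a(t):=\min_{i,j\in[N]}a_{ij}(t)$.
   Context: Let $N\ge2$, $d\ge1$ be integers, $[N]=\{1,\dots,N\}$, $0\le\sigma\le\tau$. Let $\psi:[0,\infty)\to[0,\infty)$ be continuous, nonincreasing, positive everywhere, with $\sup\psi\le1$. Given $x_i^0\in C^1([-\tau,0],\mathbb{R}^d)$, $v_i^0\in C([-\tau,0],\mathbb{R}^d)$ with $\frac{\mathrm d}{\mathrm dt}x_i^0=v_i^0$, $\{x_i,v_i\}$ is the global solution of $\dot x_i(t)=v_i(t)$, $\dot v_i(t)=\sum_{j\ne i}a_{ij}(t)(v_j(t-\tau)-v_i(t-\sigma))$ for $t>0$, with $a_{ij}(t)=\frac1{N-1}\psi(|x_i(t-\sigma)-x_j(t-\tau)|)$ for all $i,j\in[N]$, and $x_i=x_i^0$, $v_i=v_i^0$ on $[-\tau,0]$ ($v_i$ continuously differentiable on $[0,\infty)$).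 $d_v(t):=\max_{i,j}|v_i(t)-v_j(t)|$. *)

theory Defs
  imports "HOL-Analysis.Analysis"
begin

definition cs_a :: "(real \<Rightarrow> real) \<Rightarrow> nat \<Rightarrow> (nat \<Rightarrow> real \<Rightarrow> 'a::real_normed_vector)
    \<Rightarrow> real \<Rightarrow> real \<Rightarrow> nat \<Rightarrow> nat \<Rightarrow> real \<Rightarrow> real" where
  "cs_a \<psi> N x \<sigma> \<tau> i j t = \<psi> (norm (x i (t - \<sigma>) - x j (t - \<tau>))) / (real N - 1)"

definition d_v :: "nat \<Rightarrow> (nat \<Rightarrow> real \<Rightarrow> 'a::real_normed_vector) \<Rightarrow> real \<Rightarrow> real" where
  "d_v N v t = Max {norm (v i t - v j t) | i j. i \<in> {1..N} \<and> j \<in> {1..N}}"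

definition a_min :: "(real \<Rightarrow> real) \<Rightarrow> nat \<Rightarrow> (nat \<Rightarrow> real \<Rightarrow> 'a::real_normed_vector)
    \<Rightarrow> real \<Rightarrow> real \<Rightarrow> real \<Rightarrow> real" where
  "a_min \<psi> N x \<sigma> \<tau> t = Min {cs_a \<psi> N x \<sigma> \<tau> i j t | i j. i \<in> {1..N} \<and> j \<in> {1..N}}"

text \<open>The Lyapunov-type functional G(t), with dv i the derivative of v i on [0,oo).\<close>
definition G_fun :: "nat \<Rightarrow> (nat \<Rightarrow> real \<Rightarrow> 'a::real_normed_vector) \<Rightarrow> (nat \<Rightarrow> real \<Rightarrow> 'a)
    \<Rightarrow> real \<Rightarrow> real \<Rightarrow> real \<Rightarrow> real" where
  "G_fun N v dv \<beta> \<tau> t = d_v N v t + \<beta> *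
     integral {max 0 (t - 2 * \<tau>)..t}
       (\<lambda>s. exp (- (t - s)) * integral {s..t} (\<lambda>r. Max ((\<lambda>i. norm (dv i r)) ` {1..N})))"

end

theory Submission
  imports Defs
begin


lemma countable_isolated:
  fixes Z :: "real set"
  shows "countable {t\<in>Z. eventually (\<lambda>s. s \<notin> Z) (at t)}"
proof -
  let ?I = "{t\<in>Z. eventually (\<lambda>s. s \<notin> Z) (at t)}"
  have "\<exists>ab::rat\<times>rat. of_rat (fst ab) < t \<and> t < of_rat (snd ab) \<and>
          (\<forall>s. of_rat (fst ab) < s \<and> s < of_rat (snd ab) \<and> s \<in> Z \<longrightarrow> s = t)" if "t \<in> ?I" for t
  proof -
    from that obtain d where d: "d > 0" "\<And>s. s \<noteq> t \<Longrightarrow> dist s t < d \<Longrightarrow> s \<notin> Z"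
      by (auto simp: eventually_at)
    obtain a where a: "t - d < of_rat a" "of_rat a < t" using of_rat_dense[of "t-d" t] d by auto
    obtain b where b: "t < of_rat b" "of_rat b < t + d" using of_rat_dense[of t "t+d"] d by auto
    show ?thesis
    proof (rule exI[of _ "(a,b)"], intro conjI allI impI)
      fix s assume s: "of_rat (fst (a,b)) < s \<and> s < of_rat (snd (a,b)) \<and> s \<in> Z"
      show "s = t"
      proof (rule ccontr)
        assume "s \<noteq> t"
        moreover have "dist s t < d" using s a b by (auto simp: dist_real_def)
        ultimately show False using d(2) s by blast
      qed
    qed (use a b in auto)
  qed
  then obtain g where g: "\<And>t. t \<in> ?I \<Longrightarrow> of_rat (fst (g t)) < t \<and> t < of_rat (snd (g t)) \<and>
          (\<forall>s. of_rat (fst (g t)) < s \<and> s < of_rat (snd (g t)) \<and> s \<in> Z \<longrightarrow> s = t)"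
    by metis
  have "inj_on g ?I"
  proof (rule inj_onI)
    fix t t' assume "t \<in> ?I" "t' \<in> ?I" "g t = g t'"
    with g[of t] g[of t'] show "t = t'" by auto
  qed
  moreover have "countable (g ` ?I)" by (rule countableI_type)
  ultimately show ?thesis using countable_image_inj_on by blast
qed

lemma iso_zero:
  fixes h :: "real \<Rightarrow> 'b::real_normed_vector"
  assumes "(h has_vector_derivative h') (at t)" "h t = 0" "h' \<noteq> 0"
  shows "eventually (\<lambda>s. h s \<noteq> 0) (at t)"
proof -
  have "((\<lambda>y. norm ((h y - h t) - (y - t) *\<^sub>R h') / norm (y - t)) \<longlongrightarrow> 0) (at t)"
    using assms(1) unfolding has_vector_derivative_def has_derivative_iff_norm by blast
  then have "eventually (\<lambda>y. norm ((h y - h t) - (y - t) *\<^sub>R h') / norm (y - t) < norm h') (at t)"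
    using assms(3) by (intro order_tendstoD(2)) auto
  moreover have "eventually (\<lambda>y. y \<noteq> t) (at t)" by (simp add: eventually_at_filter)
  ultimately show ?thesis
  proof eventually_elim
    case (elim y)
    show ?case
    proof
      assume "h y = 0"
      then have "norm ((h y - h t) - (y - t) *\<^sub>R h') / norm (y - t) = norm h'"
        using assms(2) elim(2) by simp
      with elim(1) show False by simp
    qed
  qed
qed

lemma max_deriv:
  fixes f :: "'p \<Rightarrow> real \<Rightarrow> real" and g :: "real \<Rightarrow> real"
  assumes P: "finite P" and p0: "p0 \<in> A" and AP: "A \<subseteq> P"
    and ge: "\<And>s p. p \<in> P \<Longrightarrow> f p s \<le> g s"
    and att: "\<And>s. \<exists>p\<in>P. g s = f p s"
    and act: "\<And>p. p \<in> A \<Longrightarrow> f p t = g t \<and> (f p has_real_derivative D) (at t)"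
    and inact: "\<And>p. p \<in> P - A \<Longrightarrow> f p t < g t \<and> isCont (f p) t"
  shows "(g has_real_derivative D) (at t)"
proof -
  have A: "finite A" using P AP finite_subset by blast
  have c0: "isCont (f p0) t" using act[OF p0] DERIV_isCont by blast
  have "eventually (\<lambda>s. \<forall>p\<in>P-A. f p s < f p0 s) (at t)"
  proof (rule eventually_ball_finite)
    show "finite (P - A)" using P by simp
    show "\<forall>p\<in>P - A. \<forall>\<^sub>F s in at t. f p s < f p0 s"
    proof
      fix p assume p: "p \<in> P - A"
      have "isCont (\<lambda>s. f p0 s - f p s) t" using c0 inact[OF p] by (intro continuous_intros) auto
      then have "((\<lambda>s. f p0 s - f p s) \<longlongrightarrow> f p0 t - f p t) (at t)" by (simp add: isCont_def)
      moreover have "0 < f p0 t - f p t" using act[OF p0] inact[OF p] by auto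
      ultimately have "eventually (\<lambda>s. 0 < f p0 s - f p s) (at t)" by (rule order_tendstoD(1))
      then show "\<forall>\<^sub>F s in at t. f p s < f p0 s" by eventually_elim simp
    qed
  qed
  define E where "E p y = norm ((f p y - f p t) - D * (y - t)) / norm (y - t)" for p y
  have E0: "(E p \<longlongrightarrow> 0) (at t)" if "p \<in> A" for p
    using conjunct2[OF act[OF that]] unfolding E_def has_field_derivative_def has_derivative_iff_norm
    by (simp add: mult.commute)
  have Enn: "E p y \<ge> 0" for p y unfolding E_def by simp
  have "((\<lambda>y. \<Sum>p\<in>A. E p y) \<longlongrightarrow> 0) (at t)" using E0 by (intro tendsto_null_sum) auto
  have "((\<lambda>y. norm ((g y - g t) - D * (y - t)) / norm (y - t)) \<longlongrightarrow> 0) (at t)"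
  proof (rule Lim_null_comparison)
    show "((\<lambda>y. \<Sum>p\<in>A. E p y) \<longlongrightarrow> 0) (at t)" using E0 by (intro tendsto_null_sum) auto
    show "\<forall>\<^sub>F y in at t. norm (norm ((g y - g t) - D * (y - t)) / norm (y - t)) \<le> (\<Sum>p\<in>A. E p y)"
      using \<open>eventually (\<lambda>s. \<forall>p\<in>P-A. f p s < f p0 s) (at t)\<close>
    proof eventually_elim
      case (elim y)
      obtain q where q: "q \<in> P" "g y = f q y" using att by blast
      have qA: "q \<in> A"
      proof (rule ccontr)
        assume "q \<notin> A"
        then have "f q y < f p0 y" using elim q by auto
        moreover have "f p0 y \<le> g y" using ge p0 AP by auto
        ultimately show False using q by simp
      qed
      have up: "(g y - g t) - D * (y - t) \<le> norm ((f q y - f q t) - D * (y - t))"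
        using q act[OF qA] by simp
      have lo: "-((g y - g t) - D * (y - t)) \<le> norm ((f p0 y - f p0 t) - D * (y - t))"
        using ge[of p0 y] p0 AP act[OF p0] by auto
      have "norm ((g y - g t) - D * (y - t)) \<le> norm ((f q y - f q t) - D * (y - t)) \<or>
            norm ((g y - g t) - D * (y - t)) \<le> norm ((f p0 y - f p0 t) - D * (y - t))"
        using up lo unfolding real_norm_def by linarith
      then have "norm ((g y - g t) - D * (y - t)) / norm (y - t) \<le> E q y \<or>
            norm ((g y - g t) - D * (y - t)) / norm (y - t) \<le> E p0 y"
        unfolding E_def by (meson divide_right_mono norm_ge_zero)
      moreover have "E q y \<le> (\<Sum>p\<in>A. E p y)" "E p0 y \<le> (\<Sum>p\<in>A. E p y)"
        using member_le_sum[of q A "\<lambda>p. E p y"] member_le_sum[of p0 A "\<lambda>p. E p y"] qA p0 A Enn by auto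
      ultimately show ?case by auto
    qed
  qed
  then show ?thesis unfolding has_field_derivative_def has_derivative_iff_norm
    by (simp add: mult.commute bounded_linear_mult_right)
qed

lemma max_cont:
  fixes f :: "'p \<Rightarrow> real \<Rightarrow> real" and g :: "real \<Rightarrow> real"
  assumes P: "finite P"
    and ge: "\<And>s p. p \<in> P \<Longrightarrow> f p s \<le> g s"
    and att: "\<And>s. \<exists>p\<in>P. g s = f p s"
    and c: "\<And>p. p \<in> P \<Longrightarrow> continuous_on S (f p)"
  shows "continuous_on S g"
  unfolding continuous_on_def
proof
  fix t assume t: "t \<in> S"
  have "((\<lambda>s. g s - g t) \<longlongrightarrow> 0) (at t within S)"
  proof (rule Lim_null_comparison)
    show "((\<lambda>s. \<Sum>p\<in>P. norm (f p s - f p t)) \<longlongrightarrow> 0) (at t within S)"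
    proof (intro tendsto_null_sum)
      fix p assume "p \<in> P"
      then have "(f p \<longlongrightarrow> f p t) (at t within S)" using c t continuous_on_def by blast
      then have "((\<lambda>s. f p s - f p t) \<longlongrightarrow> 0) (at t within S)" by (simp add: LIM_zero)
      then show "((\<lambda>s. norm (f p s - f p t)) \<longlongrightarrow> 0) (at t within S)" by (simp add: tendsto_rabs_zero)
    qed
    show "\<forall>\<^sub>F s in at t within S. norm (g s - g t) \<le> (\<Sum>p\<in>P. norm (f p s - f p t))"
    proof (rule always_eventually, rule allI)
      fix s
      obtain q where q: "q \<in> P" "g s = f q s" using att by blast
      obtain q' where q': "q' \<in> P" "g t = f q' t" using att by blast
      have "g s - g t \<le> norm (f q s - f q t)" using q ge[of q t] by auto
      moreover have "g t - g s \<le> norm (f q' s - f q' t)" using q' ge[of q' s] by auto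
      moreover have "norm (f q s - f q t) \<le> (\<Sum>p\<in>P. norm (f p s - f p t))"
        by (rule member_le_sum) (use q P in auto)
      moreover have "norm (f q' s - f q' t) \<le> (\<Sum>p\<in>P. norm (f p s - f p t))"
        by (rule member_le_sum) (use q' P in auto)
      ultimately show "norm (g s - g t) \<le> (\<Sum>p\<in>P. norm (f p s - f p t))" by auto
    qed
  qed
  then show "(g \<longlongrightarrow> g t) (at t within S)" by (simp add: LIM_zero_iff)
qed




lemma cont_on_halfline:
  fixes f :: "real \<Rightarrow> 'b::topological_space"
  assumes "\<And>b. b \<ge> a \<Longrightarrow> continuous_on {a..b} f"
  shows "continuous_on {a..} f"
  unfolding continuous_on_eq_continuous_within
proof
  fix x assume x: "x \<in> {a..}"
  have "at x within {a..} = at x within {a..x+1}"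
    by (rule at_within_nhd[of _ "{x-1<..<x+1}"]) (use x in auto)
  moreover have "continuous_on {a..x+1} f" using assms x by simp
  then have "continuous (at x within {a..x+1}) f" using x by (simp add: continuous_on_eq_continuous_within)
  ultimately show "continuous (at x within {a..}) f" by simp
qed

lemma indef_int_deriv:
  fixes f :: "real \<Rightarrow> real"
  assumes "continuous_on {a..} f" "x > a"
  shows "((\<lambda>u. integral {a..u} f) has_real_derivative f x) (at x)"
proof -
  have "((\<lambda>u. integral {a..u} f) has_vector_derivative f x) (at x within {a..x+1})"
    by (rule integral_has_vector_derivative, rule continuous_on_subset[OF assms(1)]) (use assms in auto)
  moreover have "at x within {a..x+1} = at x"
    by (rule at_within_interior) (use assms in auto)
  ultimately show ?thesis by (simp add: has_real_derivative_iff_has_vector_derivative)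
qed

lemma indef_int_cont:
  fixes f :: "real \<Rightarrow> real"
  assumes "continuous_on {a..} f"
  shows "continuous_on {a..} (\<lambda>u. integral {a..u} f)"
proof (rule cont_on_halfline)
  fix b assume "b \<ge> a"
  have "continuous_on {a..b} f" by (rule continuous_on_subset[OF assms]) auto
  then have "f integrable_on {a..b}" by (rule integrable_continuous_interval)
  then show "continuous_on {a..b} (\<lambda>u. integral {a..u} f)" by (rule indefinite_integral_continuous_1)
qed

lemma indef_int_diff:
  fixes f :: "real \<Rightarrow> real"
  assumes "continuous_on {c..} f" "c \<le> a" "a \<le> b"
  shows "integral {a..b} f = integral {c..b} f - integral {c..a} f"
proof -
  have "f integrable_on {c..b}"
    by (rule integrable_continuous_interval, rule continuous_on_subset[OF assms(1)]) (use assms in auto)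
  from Henstock_Kurzweil_Integration.integral_combine[OF assms(2,3) this] show ?thesis by simp
qed

lemma vec_ftc_bound:
  fixes u :: "real \<Rightarrow> 'a::euclidean_space" and m :: "real \<Rightarrow> real"
  assumes "a \<le> b" "\<And>s. s \<in> {a..b} \<Longrightarrow> (u has_vector_derivative u' s) (at s within {a..b})"
    and "continuous_on {a..b} u'" "continuous_on {a..b} m" "\<And>s. s \<in> {a..b} \<Longrightarrow> norm (u' s) \<le> m s"
  shows "norm (u b - u a) \<le> integral {a..b} m"
proof -
  have "(u' has_integral (u b - u a)) {a..b}" by (rule fundamental_theorem_of_calculus) (use assms in auto)
  then have "u b - u a = integral {a..b} u'" by (simp add: integral_unique)
  also have "norm \<dots> \<le> integral {a..b} m"
    by (rule integral_norm_bound_integral) (use assms in \<open>auto intro: integrable_continuous_interval\<close>)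
  finally show ?thesis .
qed




locale cs =
  fixes N :: nat and \<sigma> \<tau> \<beta> :: real and \<psi> :: "real \<Rightarrow> real"
    and x v dv :: "nat \<Rightarrow> real \<Rightarrow> 'a::euclidean_space"
  assumes N2: "N \<ge> 2"
    and sig0: "0 \<le> \<sigma>" and sigtau: "\<sigma> \<le> \<tau>"
    and psi_pos: "\<And>r. 0 \<le> r \<Longrightarrow> \<psi> r > 0"
    and psi_le1: "\<And>r. 0 \<le> r \<Longrightarrow> \<psi> r \<le> 1"
    and v_cont: "\<And>i. i \<in> {1..N} \<Longrightarrow> continuous_on {- \<tau>..} (v i)"
    and v_deriv: "\<And>i t. i \<in> {1..N} \<Longrightarrow> t \<ge> 0 \<Longrightarrow>
        (v i has_vector_derivative dv i t) (at t within {0..})"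
    and dv_cont: "\<And>i. i \<in> {1..N} \<Longrightarrow> continuous_on {0..} (dv i)"
    and ode: "\<And>i t. i \<in> {1..N} \<Longrightarrow> t > 0 \<Longrightarrow>
        dv i t = (\<Sum>j\<in>{1..N} - {i}. cs_a \<psi> N x \<sigma> \<tau> i j t *\<^sub>R (v j (t - \<tau>) - v i (t - \<sigma>)))"
    and beta_pos: "\<beta> > 0"
begin

lemma tau0: "\<tau> \<ge> 0" using sig0 sigtau by simp

lemma N1: "real N - 1 > 0" using N2 by simp

definition M :: "real \<Rightarrow> real" where "M r = Max ((\<lambda>i. norm (dv i r)) ` {1..N})"

lemma M_ge: "i \<in> {1..N} \<Longrightarrow> norm (dv i r) \<le> M r"
  unfolding M_def by (rule Max_ge) auto

lemma M_att: "\<exists>i\<in>{1..N}. M r = norm (dv i r)"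
proof -
  have "M r \<in> (\<lambda>i. norm (dv i r)) ` {1..N}" unfolding M_def
    by (rule Max_in) (use N2 in auto)
  then show ?thesis by auto
qed

lemma M_nn: "0 \<le> M r"
proof -
  have "1 \<in> {1..N}" using N2 by simp
  from M_ge[OF this, of r] show ?thesis using norm_ge_zero[of "dv 1 r"] by linarith
qed

lemma M_cont: "continuous_on {0..} M"
  by (rule max_cont[of "{1..N}" "\<lambda>i r. norm (dv i r)"])
     (use M_ge M_att dv_cont in \<open>auto intro: continuous_intros\<close>)

definition F :: "real \<Rightarrow> real" where "F u = integral {0..u} M"

lemma F_diff: "0 \<le> a \<Longrightarrow> a \<le> b \<Longrightarrow> integral {a..b} M = F b - F a"
  unfolding F_def by (rule indef_int_diff[OF M_cont]) auto

lemma M_integrable: "0 \<le> a \<Longrightarrow> M integrable_on {a..b}"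
  by (rule integrable_continuous_interval, rule continuous_on_subset[OF M_cont]) auto

lemma F_mono: "0 \<le> a \<Longrightarrow> a \<le> b \<Longrightarrow> F a \<le> F b"
  using F_diff[of a b] integral_nonneg[OF M_integrable[of a b]] M_nn by force

lemma F_cont: "continuous_on {0..} F"
  unfolding F_def by (rule indef_int_cont[OF M_cont])

lemma F_deriv: "u > 0 \<Longrightarrow> (F has_real_derivative M u) (at u)"
  unfolding F_def by (rule indef_int_deriv[OF M_cont]) auto

lemma v_at: "i \<in> {1..N} \<Longrightarrow> t > 0 \<Longrightarrow> (v i has_vector_derivative dv i t) (at t)"
proof -
  assume a: "i \<in> {1..N}" "t > 0"
  have "at t within {0..} = at t" by (rule at_within_interior) (use a in auto)
  moreover have "(v i has_vector_derivative dv i t) (at t within {0..})" using v_deriv a by simp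
  ultimately show ?thesis by simp
qed

lemma v_bound: 
  assumes i: "i \<in> {1..N}" and ab: "0 \<le> a" "a \<le> b"
  shows "norm (v i b - v i a) \<le> F b - F a"
proof -
  have "norm (v i b - v i a) \<le> integral {a..b} M"
  proof (rule vec_ftc_bound[where u'="dv i"])
    show "(v i has_vector_derivative dv i s) (at s within {a..b})" if "s \<in> {a..b}" for s
      using v_deriv[OF i, of s] that ab has_vector_derivative_within_subset[of "v i" "dv i s" s "{0..}" "{a..b}"]
      by auto
    show "continuous_on {a..b} (dv i)" by (rule continuous_on_subset[OF dv_cont[OF i]]) (use ab in auto)
    show "continuous_on {a..b} M" by (rule continuous_on_subset[OF M_cont]) (use ab in auto)
  qed (use ab M_ge i in auto)
  then show ?thesis using F_diff ab by simp
qed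


definition P :: "(nat \<times> nat) set" where "P = {1..N} \<times> {1..N}"
definition w :: "nat \<times> nat \<Rightarrow> real \<Rightarrow> 'a" where "w p s = v (fst p) s - v (snd p) s"
definition fw :: "nat \<times> nat \<Rightarrow> real \<Rightarrow> real" where "fw p s = norm (w p s)"

lemma P_fin: "finite P" unfolding P_def by simp
lemma P_ne: "(1,1) \<in> P" unfolding P_def using N2 by simp

lemma dv_eq: "d_v N v s = Max ((\<lambda>p. fw p s) ` P)"
proof -
  have "{norm (v i s - v j s) | i j. i \<in> {1..N} \<and> j \<in> {1..N}} = (\<lambda>p. fw p s) ` P"
    unfolding P_def fw_def w_def by force
  then show ?thesis unfolding d_v_def by simp
qed

lemma dv_ge: "p \<in> P \<Longrightarrow> fw p s \<le> d_v N v s"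
  unfolding dv_eq by (rule Max_ge) (use P_fin in auto)

lemma dv_att: "\<exists>p\<in>P. d_v N v s = fw p s"
proof -
  have "d_v N v s \<in> (\<lambda>p. fw p s) ` P" unfolding dv_eq
    by (rule Max_in) (use P_fin P_ne in auto)
  then show ?thesis by auto
qed

lemma dv_nn: "0 \<le> d_v N v s"
  using dv_ge[OF P_ne, of s] unfolding fw_def by (meson norm_ge_zero order_trans)

lemma dv_ge': "i \<in> {1..N} \<Longrightarrow> j \<in> {1..N} \<Longrightarrow> norm (v i s - v j s) \<le> d_v N v s"
  using dv_ge[of "(i,j)" s] unfolding P_def fw_def w_def by auto

lemma dvel_cont: "continuous_on {-\<tau>..} (d_v N v)"
proof (rule max_cont[OF P_fin])
  show "fw p s \<le> d_v N v s" if "p \<in> P" for p s using dv_ge that by simp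
  show "\<exists>p\<in>P. d_v N v s = fw p s" for s using dv_att by simp
  show "continuous_on {- \<tau>..} (fw p)" if "p \<in> P" for p
    unfolding fw_def w_def using that v_cont unfolding P_def
    by (intro continuous_intros) (auto simp: mem_Times_iff)
qed


lemma EF_cont: "continuous_on {0..} (\<lambda>s. exp s * F s)"
  using F_cont by (intro continuous_intros) auto

definition K :: "real \<Rightarrow> real" where "K u = integral {0..u} (\<lambda>s. exp s * F s)"

lemma K_cont: "continuous_on {0..} K"
  unfolding K_def by (rule indef_int_cont[OF EF_cont])

lemma K_deriv: "u > 0 \<Longrightarrow> (K has_real_derivative exp u * F u) (at u)"
  unfolding K_def by (rule indef_int_deriv[OF EF_cont, of u]) auto

lemma K_diff: "0 \<le> a \<Longrightarrow> a \<le> b \<Longrightarrow> integral {a..b} (\<lambda>s. exp s * F s) = K b - K a"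
  unfolding K_def by (rule indef_int_diff[OF EF_cont]) auto

definition Hi :: "real \<Rightarrow> real \<Rightarrow> real" where "Hi u s = exp (- (u - s)) * integral {s..u} M"

lemma Hi_nn: "0 \<le> s \<Longrightarrow> s \<le> u \<Longrightarrow> 0 \<le> Hi u s"
  unfolding Hi_def using F_diff[of s u] F_mono[of s u] by simp

lemma Hi_rep:
  assumes a: "0 \<le> a" "a \<le> u"
  shows "(Hi u has_integral (F u * (1 - exp (a - u)) - exp (- u) * (K u - K a))) {a..u}"
proof -
  have e: "((\<lambda>s. exp (s - u)) has_integral (exp (u - u) - exp (a - u))) {a..u}"
  proof (rule fundamental_theorem_of_calculus)
    show "a \<le> u" using a by simp
    fix y assume "y \<in> {a..u}"
    have "((\<lambda>s. exp (s - u)) has_real_derivative exp (y - u)) (at y within {a..u})"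
      by (auto intro!: derivative_eq_intros)
    then show "((\<lambda>s. exp (s - u)) has_vector_derivative exp (y - u)) (at y within {a..u})"
      by (simp add: has_real_derivative_iff_has_vector_derivative)
  qed
  have "(\<lambda>s. exp s * F s) integrable_on {a..u}"
    by (rule integrable_continuous_interval, rule continuous_on_subset[OF EF_cont]) (use a in auto)
  then have k: "((\<lambda>s. exp s * F s) has_integral (K u - K a)) {a..u}"
    using K_diff[OF a] by (metis has_integral_integral)
  have "((\<lambda>s. F u * exp (s - u) - exp (- u) * (exp s * F s)) has_integral
        (F u * (exp (u - u) - exp (a - u)) - exp (- u) * (K u - K a))) {a..u}"
    by (rule has_integral_diff[OF has_integral_mult_right[OF e] has_integral_mult_right[OF k]])
  then have "((\<lambda>s. F u * exp (s - u) - exp (- u) * (exp s * F s)) has_integral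
        (F u * (1 - exp (a - u)) - exp (- u) * (K u - K a))) {a..u}" by simp
  then show ?thesis
  proof (rule has_integral_eq[rotated])
    fix s assume s: "s \<in> {a..u}"
    have I: "integral {s..u} M = F u - F s" using F_diff[of s u] s a by simp
    have E: "exp (- u) * (exp s * F s) = exp (s - u) * F s"
      by (simp add: mult.assoc[symmetric] exp_add[symmetric])
    have "Hi u s = exp (s - u) * (F u - F s)" unfolding Hi_def I by simp
    moreover have "F u * exp (s - u) - exp (- u) * (exp s * F s) = exp (s - u) * (F u - F s)"
      by (subst E) (simp add: algebra_simps)
    ultimately show "F u * exp (s - u) - exp (- u) * (exp s * F s) = Hi u s"
      by simp
  qed
qed

definition am :: "real \<Rightarrow> real" where "am u = max 0 (u - 2 * \<tau>)"
definition Hf :: "real \<Rightarrow> real" where "Hf u = integral {am u..u} (Hi u)"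
definition R :: "real \<Rightarrow> real" where
  "R u = F u * (1 - exp (am u - u)) - exp (- u) * (K u - K (am u))"

lemma am_props: "0 \<le> u \<Longrightarrow> 0 \<le> am u \<and> am u \<le> u"
  unfolding am_def using tau0 by auto

lemma Hf_R: "0 \<le> u \<Longrightarrow> Hf u = R u"
  unfolding Hf_def R_def using Hi_rep[of "am u" u] am_props[of u] by (simp add: integral_unique)

lemma Hf_nn: "0 \<le> u \<Longrightarrow> 0 \<le> Hf u"
proof -
  assume u: "0 \<le> u"
  have "(Hi u has_integral R u) {am u..u}"
    unfolding R_def using Hi_rep[of "am u" u] am_props[OF u] by simp
  moreover have "\<forall>s\<in>{am u..u}. 0 \<le> Hi u s" using Hi_nn am_props[OF u] by auto
  ultimately have "0 \<le> R u" using has_integral_nonneg by blast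
  then show ?thesis using Hf_R[OF u] by simp
qed

lemma R_cont: "continuous_on {0..} R"
proof -
  have am_c: "continuous_on {0..} am" unfolding am_def by (intro continuous_intros)
  have "continuous_on {0..} (\<lambda>u. K (am u))"
    by (rule continuous_on_compose2[OF K_cont am_c]) (use am_props in auto)
  then show ?thesis unfolding R_def using F_cont am_c K_cont
    by (intro continuous_intros) auto
qed

lemma G_eq: "G_fun N v dv \<beta> \<tau> = (\<lambda>u. d_v N v u + \<beta> * Hf u)"
  by (rule ext) (simp add: G_fun_def Hf_def Hi_def[abs_def] am_def M_def[abs_def])

lemma G_cont: "continuous_on {0..} (G_fun N v dv \<beta> \<tau>)"
proof -
  have "continuous_on {0..} (\<lambda>u. d_v N v u + \<beta> * R u)"
    using continuous_on_subset[OF dvel_cont, of "{0..}"] R_cont tau0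
    by (intro continuous_intros) auto
  then show ?thesis unfolding G_eq by (rule continuous_on_eq) (simp add: Hf_R)
qed

lemma Hf_deriv:
  assumes t: "t > 2 * \<tau>"
  shows "(Hf has_real_derivative
     (M t * (1 - exp (- 2 * \<tau>)) - Hf t - exp (- 2 * \<tau>) * (F t - F (t - 2 * \<tau>)))) (at t)"
proof -
  define R2 where "R2 u = F u * (1 - exp (- 2 * \<tau>)) - exp (- u) * (K u - K (u - 2 * \<tau>))" for u
  have t0: "t > 0" "t - 2 * \<tau> > 0" using t tau0 by auto
  have g: "((\<lambda>u. u - 2 * \<tau>) has_real_derivative 1) (at t)"
    by (auto intro!: derivative_eq_intros)
  have dK2: "((\<lambda>u. K (u - 2 * \<tau>)) has_real_derivative exp (t - 2 * \<tau>) * F (t - 2 * \<tau>) * 1) (at t)"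
    using DERIV_chain2[of K "exp (t - 2 * \<tau>) * F (t - 2 * \<tau>)" "\<lambda>u. u - 2 * \<tau>" t 1 UNIV]
      K_deriv[OF t0(2)] g by simp
  have dR2: "(R2 has_real_derivative
      M t * (1 - exp (- 2 * \<tau>)) - ((- exp (- t)) * (K t - K (t - 2 * \<tau>))
        + exp (- t) * (exp t * F t - exp (t - 2 * \<tau>) * F (t - 2 * \<tau>) * 1))) (at t)"
    unfolding R2_def
    apply (intro DERIV_diff DERIV_mult' DERIV_cmult DERIV_const derivative_eq_intros(1))
    apply (auto intro!: derivative_eq_intros)
    using F_deriv[OF t0(1)] K_deriv[OF t0(1)] dK2 by auto
  have hf: "Hf t = R2 t" using Hf_R[of t] t0 unfolding R_def R2_def am_def by simp
  have h2: "exp (- t) * exp t = 1" by (simp add: exp_add[symmetric])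
  have h3: "exp (- t) * exp (t - 2 * \<tau>) = exp (- 2 * \<tau>)"
    by (simp add: exp_add[symmetric])
  have "exp (- t) * (exp t * F t - exp (t - 2 * \<tau>) * F (t - 2 * \<tau>) * 1)
      = (exp (- t) * exp t) * F t - (exp (- t) * exp (t - 2 * \<tau>)) * F (t - 2 * \<tau>)"
    by (simp add: algebra_simps)
  also have "\<dots> = F t - exp (- 2 * \<tau>) * F (t - 2 * \<tau>)" by (simp only: h2 h3 mult_1)
  finally have X: "exp (- t) * (exp t * F t - exp (t - 2 * \<tau>) * F (t - 2 * \<tau>) * 1)
      = F t - exp (- 2 * \<tau>) * F (t - 2 * \<tau>)" .
  have eq: "M t * (1 - exp (- 2 * \<tau>)) - ((- exp (- t)) * (K t - K (t - 2 * \<tau>))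
        + exp (- t) * (exp t * F t - exp (t - 2 * \<tau>) * F (t - 2 * \<tau>) * 1))
      = M t * (1 - exp (- 2 * \<tau>)) - Hf t - exp (- 2 * \<tau>) * (F t - F (t - 2 * \<tau>))"
    unfolding X hf R2_def by (simp add: algebra_simps)
  from dR2 eq have d: "(R2 has_real_derivative
     (M t * (1 - exp (- 2 * \<tau>)) - Hf t - exp (- 2 * \<tau>) * (F t - F (t - 2 * \<tau>)))) (at t)"
    by (metis DERIV_cong)
  show ?thesis
  proof (rule has_field_derivative_transform_within_open[OF d, of "{2 * \<tau><..}"])
    fix u assume "u \<in> {2 * \<tau><..}"
    then show "R2 u = Hf u" using Hf_R[of u] tau0 unfolding R_def R2_def am_def by simp
  qed (use t in auto)
qed

end



context cs begin

definition w' :: "nat \<times> nat \<Rightarrow> real \<Rightarrow> 'a" where "w' p s = dv (fst p) s - dv (snd p) s"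

lemma P_mem: "p \<in> P \<Longrightarrow> fst p \<in> {1..N} \<and> snd p \<in> {1..N}"
  unfolding P_def by (auto simp: mem_Times_iff)

lemma w_deriv: "p \<in> P \<Longrightarrow> t > 0 \<Longrightarrow> (w p has_vector_derivative w' p t) (at t)"
  unfolding w_def[abs_def] w'_def using P_mem[of p] v_at
  by (intro has_vector_derivative_diff) auto

lemma fw_deriv:
  assumes p: "p \<in> P" and t: "t > 0" and nz: "w p t \<noteq> 0"
  shows "(fw p has_real_derivative (w' p t \<bullet> sgn (w p t))) (at t)"
proof -
  have "((\<lambda>s. norm (w p s)) has_derivative (\<lambda>h. (h *\<^sub>R w' p t) \<bullet> sgn (w p t))) (at t)"
    using has_derivative_compose[OF w_deriv[OF p t, unfolded has_vector_derivative_def]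
        has_derivative_norm[OF nz]] by simp
  then have "((\<lambda>s. norm (w p s)) has_derivative (\<lambda>h. (w' p t \<bullet> sgn (w p t)) * h)) (at t)"
    by (rule has_derivative_eq_rhs) (simp add: fun_eq_iff)
  then show ?thesis unfolding has_field_derivative_def fw_def[abs_def] by simp
qed

lemma fw_deriv0:
  assumes p: "p \<in> P" and t: "t > 0" and z: "w p t = 0" "w' p t = 0"
  shows "(fw p has_real_derivative 0) (at t)"
proof -
  have "((\<lambda>y. norm ((w p y - w p t) - (y - t) *\<^sub>R w' p t) / norm (y - t)) \<longlongrightarrow> 0) (at t)"
    using w_deriv[OF p t] unfolding has_vector_derivative_def has_derivative_iff_norm by blast
  then have "((\<lambda>y. norm ((fw p y - fw p t) - 0 * (y - t)) / norm (y - t)) \<longlongrightarrow> 0) (at t)"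
    using z unfolding fw_def by simp
  then show ?thesis unfolding has_field_derivative_def has_derivative_iff_norm
    by (simp add: bounded_linear_mult_right)
qed

definition Iso :: "(real \<Rightarrow> 'b::zero) \<Rightarrow> real set" where
  "Iso h = {t \<in> {s. h s = 0}. eventually (\<lambda>s. s \<notin> {s. h s = 0}) (at t)}"

lemma Iso_countable: "countable (Iso h)"
  unfolding Iso_def by (rule countable_isolated)

lemma IsoI: "(h has_vector_derivative h') (at t) \<Longrightarrow> h t = 0 \<Longrightarrow> h' \<noteq> 0 \<Longrightarrow> t \<in> Iso h"
  unfolding Iso_def using iso_zero[of h h' t] by simp

definition Bad :: "real set" where
  "Bad = (\<Union>p\<in>P. \<Union>q\<in>P. Iso (\<lambda>s. fw p s - fw q s)) \<union> (\<Union>p\<in>P. Iso (w p))"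

lemma Bad_countable: "countable Bad"
  unfolding Bad_def using P_fin
  by (intro countable_Un countable_UN) (auto simp: Iso_countable intro: countable_finite)

lemma dv_diff:
  assumes t: "t > 0" "t \<notin> Bad"
  shows "\<exists>D. (d_v N v has_real_derivative D) (at t)"
proof (cases "d_v N v t = 0")
  case True
  have wz: "w p t = 0" if "p \<in> P" for p
    using dv_ge[OF that, of t] True unfolding fw_def by simp
  have w'z: "w' p t = 0" if p: "p \<in> P" for p
  proof (rule ccontr)
    assume "w' p t \<noteq> 0"
    then have "t \<in> Iso (w p)" using IsoI[OF w_deriv[OF p t(1)] wz[OF p]] by simp
    then show False using t(2) p unfolding Bad_def by blast
  qed
  have "(d_v N v has_real_derivative 0) (at t)"
  proof (rule max_deriv[OF P_fin P_ne order_refl])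
    show "fw p s \<le> d_v N v s" if "p \<in> P" for p s using dv_ge that by simp
    show "\<exists>p\<in>P. d_v N v s = fw p s" for s using dv_att by simp
    show "fw p t = d_v N v t \<and> (fw p has_real_derivative 0) (at t)" if "p \<in> P" for p
      using fw_deriv0[OF that t(1) wz[OF that] w'z[OF that]] True wz[OF that] unfolding fw_def by simp
  qed auto
  then show ?thesis by blast
next
  case False
  then have pos: "d_v N v t > 0" using dv_nn[of t] by simp
  define A where "A = {p\<in>P. fw p t = d_v N v t}"
  obtain p0 where p0: "p0 \<in> P" "d_v N v t = fw p0 t" using dv_att by blast
  have p0A: "p0 \<in> A" unfolding A_def using p0 by simp
  have nzA: "w p t \<noteq> 0" if "p \<in> A" for p using that pos unfolding A_def fw_def by auto
  define Dp where "Dp p = w' p t \<bullet> sgn (w p t)" for p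
  have dA: "(fw p has_real_derivative Dp p) (at t)" if "p \<in> A" for p
    unfolding Dp_def using fw_deriv[OF _ t(1) nzA[OF that]] that unfolding A_def by simp
  have same: "Dp p = Dp p0" if p: "p \<in> A" for p
  proof (rule ccontr)
    assume ne: "Dp p \<noteq> Dp p0"
    have "((\<lambda>s. fw p s - fw p0 s) has_real_derivative Dp p - Dp p0) (at t)"
      using dA[OF p] dA[OF p0A] by (rule DERIV_diff)
    then have "((\<lambda>s. fw p s - fw p0 s) has_vector_derivative Dp p - Dp p0) (at t)"
      by (simp add: has_real_derivative_iff_has_vector_derivative)
    moreover have "fw p t - fw p0 t = 0" using p p0A unfolding A_def by simp
    ultimately have "t \<in> Iso (\<lambda>s. fw p s - fw p0 s)" using ne by (intro IsoI) auto
    then show False using t(2) p p0A unfolding Bad_def A_def by blast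
  qed
  have "(d_v N v has_real_derivative Dp p0) (at t)"
  proof (rule max_deriv[OF P_fin p0A])
    show "A \<subseteq> P" unfolding A_def by auto
    show "fw p s \<le> d_v N v s" if "p \<in> P" for p s using dv_ge that by simp
    show "\<exists>p\<in>P. d_v N v s = fw p s" for s using dv_att by simp
    show "fw p t = d_v N v t \<and> (fw p has_real_derivative Dp p0) (at t)" if "p \<in> A" for p
      using dA[OF that] same[OF that] that unfolding A_def by simp
    show "fw p t < d_v N v t \<and> isCont (fw p) t" if "p \<in> P - A" for p
    proof
      show "fw p t < d_v N v t" using that dv_ge[of p t] unfolding A_def by force
      have "continuous (at t) (w p)"
        using has_vector_derivative_continuous[OF w_deriv[of p t]] that t by simp
      then show "isCont (fw p) t" unfolding fw_def[abs_def] by (intro continuous_intros)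
    qed
  qed
  then show ?thesis by blast
qed

end



context cs begin

abbreviation "ca i j t \<equiv> cs_a \<psi> N x \<sigma> \<tau> i j t"
abbreviation "amn t \<equiv> a_min \<psi> N x \<sigma> \<tau> t"

lemma amin_set: "{cs_a \<psi> N x \<sigma> \<tau> i j t | i j. i \<in> {1..N} \<and> j \<in> {1..N}}
   = (\<lambda>p. ca (fst p) (snd p) t) ` P"
  unfolding P_def by force

lemma amin_le: "i \<in> {1..N} \<Longrightarrow> j \<in> {1..N} \<Longrightarrow> amn t \<le> ca i j t"
  unfolding a_min_def amin_set by (rule Min_le) (auto simp: P_fin P_def intro!: rev_image_eqI[of "(i,j)"])

lemma amin_att: "\<exists>p\<in>P. amn t = ca (fst p) (snd p) t"
proof -
  have "amn t \<in> (\<lambda>p. ca (fst p) (snd p) t) ` P"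
    unfolding a_min_def amin_set by (rule Min_in) (use P_fin P_ne in auto)
  then show ?thesis by auto
qed

lemma ca_pos: "0 < ca i j t"
  unfolding cs_a_def using psi_pos[of "norm (x i (t - \<sigma>) - x j (t - \<tau>))"] N1 by simp

lemma ca_le: "ca i j t \<le> 1 / (real N - 1)"
  unfolding cs_a_def using psi_le1[of "norm (x i (t - \<sigma>) - x j (t - \<tau>))"] N1
  by (simp add: divide_right_mono)

lemma amin_nn: "0 \<le> amn t"
  using amin_att[of t] ca_pos by (metis less_imp_le)

lemma amin_le1: "(real N - 1) * amn t \<le> 1"
proof -
  obtain p where "p \<in> P" "amn t = ca (fst p) (snd p) t" using amin_att by blast
  then have "amn t \<le> 1 / (real N - 1)" using ca_le by simp
  then show ?thesis using N1 by (simp add: field_simps)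
qed

lemma sum_ca: "i \<in> {1..N} \<Longrightarrow> (\<Sum>k\<in>{1..N} - {i}. ca i k t) \<le> 1"
proof -
  assume i: "i \<in> {1..N}"
  have "(\<Sum>k\<in>{1..N} - {i}. ca i k t) \<le> of_nat (card ({1..N} - {i})) * (1 / (real N - 1))"
    by (rule sum_bounded_above) (rule ca_le)
  also have "card ({1..N} - {i}) = N - 1" using i by simp
  also have "real (N - 1) = real N - 1" using N2 by simp
  finally show ?thesis using N1 by simp
qed

lemma one_side:
  assumes i: "i \<in> {1..N}" and t: "t > 2 * \<tau>" and u: "norm u \<le> 1"
    and neg: "\<And>k. k \<in> {1..N} \<Longrightarrow> u \<bullet> (v k t - v i t) \<le> 0"
  shows "u \<bullet> dv i t \<le> amn t * (\<Sum>k\<in>{1..N} - {i}. u \<bullet> (v k t - v i t)) + 2 * (F t - F (t - \<tau>))"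
proof -
  define I where "I = F t - F (t - \<tau>)"
  have t0: "t > 0" "t - \<tau> \<ge> 0" using t tau0 by auto
  have I0: "0 \<le> I" unfolding I_def using F_mono[of "t - \<tau>" t] t0 tau0 by simp
  have cs: "u \<bullet> z \<le> norm z" for z
    using norm_cauchy_schwarz[of u z] u mult_right_mono[OF u norm_ge_zero[of z]] by simp
  have tm: "ca i k t * (u \<bullet> (v k (t - \<tau>) - v i (t - \<sigma>)))
      \<le> amn t * (u \<bullet> (v k t - v i t)) + ca i k t * (2 * I)" if k: "k \<in> {1..N} - {i}" for k
  proof -
    have b1: "u \<bullet> (v i t - v i (t - \<sigma>)) \<le> I"
    proof -
      have "norm (v i t - v i (t - \<sigma>)) \<le> F t - F (t - \<sigma>)" using v_bound[OF i, of "t - \<sigma>" t] t0 sigtau sig0 by simp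
      moreover have "F (t - \<tau>) \<le> F (t - \<sigma>)" using F_mono t0 sigtau by simp
      ultimately show ?thesis using cs[of "v i t - v i (t - \<sigma>)"] unfolding I_def by linarith
    qed
    have b2: "- (u \<bullet> (v k t - v k (t - \<tau>))) \<le> I"
    proof -
      have "norm (v k t - v k (t - \<tau>)) \<le> I" unfolding I_def using v_bound[of k "t - \<tau>" t] k t0 tau0 by simp
      moreover have "- (u \<bullet> (v k t - v k (t - \<tau>))) = u \<bullet> (v k (t - \<tau>) - v k t)"
        by (simp add: inner_diff_right)
      moreover have "norm (v k (t - \<tau>) - v k t) = norm (v k t - v k (t - \<tau>))"
        by (rule norm_minus_commute)
      ultimately show ?thesis using cs[of "v k (t - \<tau>) - v k t"] by linarith
    qed
    have id: "u \<bullet> (v k (t - \<tau>) - v i (t - \<sigma>)) = u \<bullet> (v k t - v i t) + u \<bullet> (v i t - v i (t - \<sigma>))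
        - u \<bullet> (v k t - v k (t - \<tau>))" by (simp add: inner_diff_right)
    have Y: "u \<bullet> (v k t - v i t) \<le> 0" using neg k by simp
    have "ca i k t * (u \<bullet> (v k (t - \<tau>) - v i (t - \<sigma>))) \<le> ca i k t * (u \<bullet> (v k t - v i t) + 2 * I)"
      using b1 b2 id ca_pos[of i k t] by (intro mult_left_mono) auto
    also have "\<dots> = ca i k t * (u \<bullet> (v k t - v i t)) + ca i k t * (2 * I)" by (simp add: algebra_simps)
    also have "ca i k t * (u \<bullet> (v k t - v i t)) \<le> amn t * (u \<bullet> (v k t - v i t))"
      using amin_le[OF i, of k t] k Y by (intro mult_right_mono_neg) auto
    finally show ?thesis by simp
  qed
  have "u \<bullet> dv i t = (\<Sum>k\<in>{1..N} - {i}. ca i k t * (u \<bullet> (v k (t - \<tau>) - v i (t - \<sigma>))))"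
    using ode[OF i t0(1)] by (simp add: inner_sum_right)
  also have "\<dots> \<le> (\<Sum>k\<in>{1..N} - {i}. amn t * (u \<bullet> (v k t - v i t)) + ca i k t * (2 * I))"
    by (rule sum_mono) (rule tm)
  also have "\<dots> = amn t * (\<Sum>k\<in>{1..N} - {i}. u \<bullet> (v k t - v i t)) + (\<Sum>k\<in>{1..N} - {i}. ca i k t) * (2 * I)"
    by (simp add: sum.distrib sum_distrib_left sum_distrib_right)
  also have "(\<Sum>k\<in>{1..N} - {i}. ca i k t) * (2 * I) \<le> 1 * (2 * I)"
    using sum_ca[OF i, of t] I0 by (intro mult_right_mono) auto
  finally show ?thesis unfolding I_def by simp
qed

lemma M_bound:
  assumes r: "r > \<tau>"
  shows "M r \<le> d_v N v (r - \<tau>) + (F r - F (r - \<tau>))"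
proof -
  define Q where "Q = d_v N v (r - \<tau>) + (F r - F (r - \<tau>))"
  have r0: "r > 0" "r - \<tau> \<ge> 0" using r tau0 by auto
  have Q0: "0 \<le> Q" unfolding Q_def using dv_nn F_mono[of "r - \<tau>" r] r0 tau0 by (simp add: add_nonneg_nonneg)
  obtain i where i: "i \<in> {1..N}" "M r = norm (dv i r)" using M_att by blast
  have tk: "norm (v k (r - \<tau>) - v i (r - \<sigma>)) \<le> Q" if k: "k \<in> {1..N} - {i}" for k
  proof -
    have "v k (r - \<tau>) - v i (r - \<sigma>) = (v k (r - \<tau>) - v i (r - \<tau>)) + (v i (r - \<tau>) - v i (r - \<sigma>))" by simp
    then have "norm (v k (r - \<tau>) - v i (r - \<sigma>)) \<le> norm (v k (r - \<tau>) - v i (r - \<tau>)) + norm (v i (r - \<sigma>) - v i (r - \<tau>))"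
      by (metis norm_minus_commute norm_triangle_ineq)
    moreover have "norm (v k (r - \<tau>) - v i (r - \<tau>)) \<le> d_v N v (r - \<tau>)" using dv_ge' k i by simp
    moreover have "norm (v i (r - \<sigma>) - v i (r - \<tau>)) \<le> F (r - \<sigma>) - F (r - \<tau>)"
      using v_bound[OF i(1), of "r - \<tau>" "r - \<sigma>"] r0 sigtau by simp
    moreover have "F (r - \<sigma>) \<le> F r" using F_mono[of "r - \<sigma>" r] r0 sigtau sig0 by simp
    ultimately show ?thesis unfolding Q_def by linarith
  qed
  have "M r \<le> (\<Sum>k\<in>{1..N} - {i}. norm (ca i k r *\<^sub>R (v k (r - \<tau>) - v i (r - \<sigma>))))"
    using i ode[OF i(1) r0(1)] norm_sum by metis
  also have "\<dots> = (\<Sum>k\<in>{1..N} - {i}. ca i k r * norm (v k (r - \<tau>) - v i (r - \<sigma>)))"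
    using ca_pos by (simp add: less_imp_le)
  also have "\<dots> \<le> (\<Sum>k\<in>{1..N} - {i}. ca i k r * Q)"
    by (rule sum_mono) (use tk ca_pos in \<open>auto intro: mult_left_mono less_imp_le\<close>)
  also have "\<dots> = (\<Sum>k\<in>{1..N} - {i}. ca i k r) * Q" by (simp add: sum_distrib_right)
  also have "\<dots> \<le> 1 * Q" using sum_ca[OF i(1), of r] Q0 by (intro mult_right_mono) auto
  finally show ?thesis unfolding Q_def by simp
qed

end



context cs begin

lemma dv_deriv_bound:
  assumes t: "t > 2 * \<tau>" and D: "(d_v N v has_real_derivative D) (at t)"
  shows "D \<le> - (real N - 1) * amn t * d_v N v t + 4 * (F t - F (t - \<tau>))"
proof -
  have t0: "t > 0" "t - \<tau> \<ge> 0" using t tau0 by auto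
  have I0: "0 \<le> F t - F (t - \<tau>)" using F_mono[of "t - \<tau>" t] t0 tau0 by simp
  obtain p0 where p0: "p0 \<in> P" "d_v N v t = fw p0 t" using dv_att by blast
  define i where "i = fst p0"
  define j where "j = snd p0"
  have ij: "i \<in> {1..N}" "j \<in> {1..N}" using P_mem[OF p0(1)] i_def j_def by auto
  show ?thesis
  proof (cases "d_v N v t = 0")
    case True
    have "D = 0"
      by (rule DERIV_local_min[OF D, of 1]) (use True dv_nn in auto)
    then show ?thesis using True I0 by simp
  next
    case False
    then have pos: "d_v N v t > 0" using dv_nn[of t] by linarith
    have nz: "w p0 t \<noteq> 0" using pos p0 unfolding fw_def by auto
    define e where "e = sgn (w p0 t)"
    have dfw: "(fw p0 has_real_derivative (w' p0 t \<bullet> e)) (at t)"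
      using fw_deriv[OF p0(1) t0(1) nz] e_def by simp
    have "((\<lambda>s. d_v N v s - fw p0 s) has_real_derivative D - w' p0 t \<bullet> e) (at t)"
      using D dfw by (rule DERIV_diff)
    moreover have "\<forall>y. \<bar>t - y\<bar> < 1 \<longrightarrow> d_v N v t - fw p0 t \<le> d_v N v y - fw p0 y"
      using p0 dv_ge by auto
    ultimately have "D - w' p0 t \<bullet> e = 0"
      using DERIV_local_min[of "\<lambda>s. d_v N v s - fw p0 s" "D - w' p0 t \<bullet> e" t 1] by simp
    then have DD: "D = e \<bullet> dv i t + (-e) \<bullet> dv j t"
      unfolding w'_def i_def j_def by (simp add: inner_diff_left inner_diff_right inner_commute)
    have ne1: "norm e \<le> 1" using nz e_def by (simp add: norm_sgn)
    have ne1': "norm (-e) \<le> 1" using ne1 by simp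
    have "e \<bullet> w p0 t = norm (w p0 t)"
      unfolding e_def using nz by (simp add: sgn_div_norm dot_square_norm power2_eq_square)
    then have ew: "e \<bullet> v i t - e \<bullet> v j t = d_v N v t"
      using p0 unfolding fw_def w_def i_def j_def by (simp add: inner_diff_right)
    have negi: "e \<bullet> (v k t - v i t) \<le> 0" if k: "k \<in> {1..N}" for k
    proof -
      have "e \<bullet> (v k t - v j t) \<le> norm e * norm (v k t - v j t)" by (rule norm_cauchy_schwarz)
      also have "\<dots> \<le> 1 * d_v N v t"
        using dv_ge'[OF k ij(2), of t] ne1 by (intro mult_mono) auto
      finally show ?thesis using ew by (simp add: inner_diff_right)
    qed
    have negj: "(-e) \<bullet> (v k t - v j t) \<le> 0" if k: "k \<in> {1..N}" for k
    proof -
      have "e \<bullet> (v i t - v k t) \<le> norm e * norm (v i t - v k t)" by (rule norm_cauchy_schwarz)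
      also have "\<dots> \<le> 1 * d_v N v t"
        using dv_ge'[OF ij(1) k, of t] ne1 by (intro mult_mono) auto
      finally show ?thesis using ew by (simp add: inner_diff_right)
    qed
    have s1: "e \<bullet> dv i t \<le> amn t * (\<Sum>k\<in>{1..N} - {i}. e \<bullet> (v k t - v i t)) + 2 * (F t - F (t - \<tau>))"
      by (rule one_side[OF ij(1) t ne1 negi])
    have s2: "(-e) \<bullet> dv j t \<le> amn t * (\<Sum>k\<in>{1..N} - {j}. (-e) \<bullet> (v k t - v j t)) + 2 * (F t - F (t - \<tau>))"
      by (rule one_side[OF ij(2) t ne1' negj])
    have a: "(\<Sum>k\<in>{1..N} - {i}. e \<bullet> (v k t - v i t)) = (\<Sum>k\<in>{1..N}. e \<bullet> (v k t - v i t))"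
      using ij by (simp add: sum_diff1)
    have b: "(\<Sum>k\<in>{1..N} - {j}. (-e) \<bullet> (v k t - v j t)) = (\<Sum>k\<in>{1..N}. (-e) \<bullet> (v k t - v j t))"
      using ij by (simp add: sum_diff1)
    have c: "(\<Sum>k\<in>{1..N}. e \<bullet> (v k t - v i t) + (-e) \<bullet> (v k t - v j t)) = (\<Sum>k\<in>{1..N}. - d_v N v t)"
    proof (rule sum.cong)
      fix k show "e \<bullet> (v k t - v i t) + (-e) \<bullet> (v k t - v j t) = - d_v N v t"
        using ew by (simp add: inner_diff_right)
    qed simp
    have sumid: "(\<Sum>k\<in>{1..N} - {i}. e \<bullet> (v k t - v i t)) + (\<Sum>k\<in>{1..N} - {j}. (-e) \<bullet> (v k t - v j t))
        = - real N * d_v N v t"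
      unfolding a b sum.distrib[symmetric] c by simp
    have "D \<le> amn t * (- real N * d_v N v t) + 4 * (F t - F (t - \<tau>))"
    proof -
      have m: "amn t * (\<Sum>k\<in>{1..N} - {i}. e \<bullet> (v k t - v i t)) + amn t * (\<Sum>k\<in>{1..N} - {j}. (-e) \<bullet> (v k t - v j t))
          = amn t * (- real N * d_v N v t)"
        by (subst distrib_left[symmetric]) (simp only: sumid)
      show ?thesis using DD s1 s2 m by linarith
    qed
    moreover have "0 \<le> amn t * d_v N v t" using amin_nn pos by simp
    ultimately show ?thesis by (simp add: algebra_simps)
  qed
qed

end



context cs begin

lemma main_ineq:
  assumes t: "t > 2 * \<tau>" and tb: "t \<notin> Bad"
    and beta_cond: "2 * \<beta> * exp (- 2 * \<tau>) - 4 * \<tau> - \<beta> \<ge> 0"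
  shows "G_fun N v dv \<beta> \<tau> differentiable (at t) \<and>
            deriv (G_fun N v dv \<beta> \<tau>) t
              \<le> 4 * integral {t - \<tau>..t} (\<lambda>s. G_fun N v dv \<beta> \<tau> (s - \<tau>))
                 - (real N - 1) * a_min \<psi> N x \<sigma> \<tau> t * G_fun N v dv \<beta> \<tau> t
                 + \<beta> * (1 - exp (- 2 * \<tau>)) * G_fun N v dv \<beta> \<tau> (t - \<tau>)"
proof -
  define GG where "GG = G_fun N v dv \<beta> \<tau>"
  define e where "e = exp (- 2 * \<tau>)"
  define I where "I = F t - F (t - \<tau>)"
  define J where "J = F t - F (t - 2 * \<tau>)"
  define dd where "dd = d_v N v t"
  have t0: "t > 0" "t - \<tau> > \<tau>" "t - 2 * \<tau> > 0" using t tau0 by auto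
  obtain D where D: "(d_v N v has_real_derivative D) (at t)" using dv_diff[OF t0(1) tb] by blast
  define H' where "H' = M t * (1 - e) - Hf t - e * J"
  have hH: "(Hf has_real_derivative H') (at t)" unfolding H'_def e_def J_def by (rule Hf_deriv[OF t])
  have dG: "(GG has_real_derivative D + \<beta> * H') (at t)"
    unfolding GG_def G_eq by (intro DERIV_add DERIV_cmult D hH)
  have diff: "GG differentiable (at t)"
    using dG unfolding has_field_derivative_def by (rule differentiableI)
  have dereq: "deriv GG t = D + \<beta> * H'" using dG by (rule DERIV_imp_deriv)
  have GGeq: "GG s = d_v N v s + \<beta> * Hf s" for s unfolding GG_def G_eq by simp
  have e01: "0 < e" "e \<le> 1" unfolding e_def using tau0 by auto
  have J0: "0 \<le> J" unfolding J_def using F_mono[of "t - 2 * \<tau>" t] t0 tau0 by simp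
  have Hf0: "0 \<le> Hf t" using Hf_nn t0 by simp
  have b1: "D \<le> - (real N - 1) * amn t * dd + 4 * I"
    unfolding dd_def I_def by (rule dv_deriv_bound[OF t D])
  have cd: "continuous_on {t - \<tau>..t} (\<lambda>s. d_v N v (s - \<tau>))"
    by (rule continuous_on_compose2[OF dvel_cont]) (use t0 in \<open>auto intro!: continuous_intros\<close>)
  have cG: "continuous_on {t - \<tau>..t} (\<lambda>s. GG (s - \<tau>))"
    unfolding GG_def by (rule continuous_on_compose2[OF G_cont]) (use t0 in \<open>auto intro!: continuous_intros\<close>)
  have int_d: "(\<lambda>s. d_v N v (s - \<tau>)) integrable_on {t - \<tau>..t}"
    by (rule integrable_continuous_interval[OF cd])
  have int_dJ: "(\<lambda>s. d_v N v (s - \<tau>) + J) integrable_on {t - \<tau>..t}"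
    by (rule integrable_continuous_interval) (use cd in \<open>auto intro!: continuous_intros\<close>)
  have int_G: "(\<lambda>s. GG (s - \<tau>)) integrable_on {t - \<tau>..t}"
    by (rule integrable_continuous_interval[OF cG])
  have "I = integral {t - \<tau>..t} M" unfolding I_def using F_diff[of "t - \<tau>" t] t0 tau0 by simp
  also have "\<dots> \<le> integral {t - \<tau>..t} (\<lambda>s. d_v N v (s - \<tau>) + J)"
  proof (rule integral_le[OF M_integrable int_dJ])
    show "0 \<le> t - \<tau>" using t0 tau0 by simp
    fix s assume s: "s \<in> {t - \<tau>..t}"
    have "M s \<le> d_v N v (s - \<tau>) + (F s - F (s - \<tau>))" using M_bound[of s] s t0 by simp
    moreover have "F s \<le> F t" using F_mono[of s t] s t0 tau0 by simp
    moreover have "F (t - 2 * \<tau>) \<le> F (s - \<tau>)" using F_mono[of "t - 2 * \<tau>" "s - \<tau>"] s t0 by simp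
    ultimately show "M s \<le> d_v N v (s - \<tau>) + J" unfolding J_def by linarith
  qed
  also have "\<dots> = integral {t - \<tau>..t} (\<lambda>s. d_v N v (s - \<tau>)) + \<tau> * J"
    using integral_add[OF int_d integrable_const_ivl[of J "t - \<tau>" t]] tau0 by (simp add: content_real)
  finally have b2: "I \<le> integral {t - \<tau>..t} (\<lambda>s. d_v N v (s - \<tau>)) + \<tau> * J" .
  have b3: "integral {t - \<tau>..t} (\<lambda>s. d_v N v (s - \<tau>)) \<le> integral {t - \<tau>..t} (\<lambda>s. GG (s - \<tau>))"
  proof (rule integral_le[OF int_d int_G])
    fix s assume s: "s \<in> {t - \<tau>..t}"
    have "0 \<le> Hf (s - \<tau>)" using Hf_nn s t0 by simp
    then show "d_v N v (s - \<tau>) \<le> GG (s - \<tau>)" unfolding GGeq using beta_pos by simp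
  qed
  have b4: "M t \<le> d_v N v (t - \<tau>) + J"
  proof -
    have "M t \<le> d_v N v (t - \<tau>) + (F t - F (t - \<tau>))" using M_bound[of t] t0 tau0 by simp
    moreover have "F (t - 2 * \<tau>) \<le> F (t - \<tau>)" using F_mono[of "t - 2 * \<tau>" "t - \<tau>"] t0 tau0 by simp
    ultimately show ?thesis unfolding J_def by linarith
  qed
  have b5: "d_v N v (t - \<tau>) \<le> GG (t - \<tau>)" unfolding GGeq using beta_pos Hf_nn[of "t - \<tau>"] t0 by simp
  have be0: "0 \<le> \<beta> * (1 - e)" using beta_pos e01 by simp
  have p1: "\<beta> * (1 - e) * M t \<le> \<beta> * (1 - e) * d_v N v (t - \<tau>) + \<beta> * (1 - e) * J"
    using mult_left_mono[OF b4 be0] by (simp add: distrib_left)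
  have p2: "\<beta> * (1 - e) * d_v N v (t - \<tau>) \<le> \<beta> * (1 - e) * GG (t - \<tau>)"
    using mult_left_mono[OF b5 be0] by simp
  have p3: "((real N - 1) * amn t) * (\<beta> * Hf t) \<le> \<beta> * Hf t"
    using amin_le1[of t] amin_nn[of t] N1 Hf0 beta_pos by (intro mult_left_le_one_le) auto
  have p4: "4 * \<tau> * J + \<beta> * (1 - e) * J - \<beta> * e * J \<le> 0"
  proof -
    have "4 * \<tau> * J + \<beta> * (1 - e) * J - \<beta> * e * J = J * (4 * \<tau> + \<beta> - 2 * \<beta> * e)"
      by (simp add: algebra_simps)
    moreover have "4 * \<tau> + \<beta> - 2 * \<beta> * e \<le> 0" using beta_cond unfolding e_def by simp
    ultimately show ?thesis using J0 by (simp add: mult_nonneg_nonpos)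
  qed
  have L: "deriv GG t = D + \<beta> * (1 - e) * M t - \<beta> * Hf t - \<beta> * e * J"
    unfolding dereq H'_def by (simp add: algebra_simps)
  have Rr: "(real N - 1) * amn t * GG t = (real N - 1) * amn t * dd + ((real N - 1) * amn t) * (\<beta> * Hf t)"
    unfolding GGeq dd_def by (simp add: algebra_simps)
  have "deriv GG t \<le> 4 * integral {t - \<tau>..t} (\<lambda>s. GG (s - \<tau>)) - (real N - 1) * amn t * GG t
        + \<beta> * (1 - e) * GG (t - \<tau>)"
    using L Rr b1 b2 b3 p1 p2 p3 p4 by linarith
  then show ?thesis using diff unfolding GG_def e_def by simp
qed

end


theorem lemma4p1:
  fixes N :: nat and \<sigma> \<tau> \<beta> :: real and \<psi> :: "real \<Rightarrow> real"
    and x v dv :: "nat \<Rightarrow> real \<Rightarrow> 'a::euclidean_space"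
  assumes N2: "N \<ge> 2"
    and delays: "0 \<le> \<sigma>" "\<sigma> \<le> \<tau>"
    and psi_cont: "continuous_on {0..} \<psi>"
    and psi_mono: "\<And>r s. 0 \<le> r \<Longrightarrow> r \<le> s \<Longrightarrow> \<psi> s \<le> \<psi> r"
    and psi_pos: "\<And>r. 0 \<le> r \<Longrightarrow> \<psi> r > 0"
    and psi_le1: "\<And>r. 0 \<le> r \<Longrightarrow> \<psi> r \<le> 1"
    and x_deriv: "\<And>i t. i \<in> {1..N} \<Longrightarrow> t \<ge> - \<tau> \<Longrightarrow>
        (x i has_vector_derivative v i t) (at t within {- \<tau>..})"
    and v_cont: "\<And>i. i \<in> {1..N} \<Longrightarrow> continuous_on {- \<tau>..} (v i)"
    and v_deriv: "\<And>i t. i \<in> {1..N} \<Longrightarrow> t \<ge> 0 \<Longrightarrow>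
        (v i has_vector_derivative dv i t) (at t within {0..})"
    and dv_cont: "\<And>i. i \<in> {1..N} \<Longrightarrow> continuous_on {0..} (dv i)"
    and ode: "\<And>i t. i \<in> {1..N} \<Longrightarrow> t > 0 \<Longrightarrow>
        dv i t = (\<Sum>j\<in>{1..N} - {i}. cs_a \<psi> N x \<sigma> \<tau> i j t *\<^sub>R (v j (t - \<tau>) - v i (t - \<sigma>)))"
    and beta_pos: "\<beta> > 0"
    and beta_cond: "2 * \<beta> * exp (- 2 * \<tau>) - 4 * \<tau> - \<beta> \<ge> 0"
  shows "AE t in lborel. t > 2 * \<tau> \<longrightarrow>
           (G_fun N v dv \<beta> \<tau> differentiable (at t) \<and>
            deriv (G_fun N v dv \<beta> \<tau>) t
              \<le> 4 * integral {t - \<tau>..t} (\<lambda>s. G_fun N v dv \<beta> \<tau> (s - \<tau>))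
                 - (real N - 1) * a_min \<psi> N x \<sigma> \<tau> t * G_fun N v dv \<beta> \<tau> t
                 + \<beta> * (1 - exp (- 2 * \<tau>)) * G_fun N v dv \<beta> \<tau> (t - \<tau>))"
  proof -
  interpret cs N \<sigma> \<tau> \<beta> \<psi> x v dv
    apply unfold_locales
    using N2 delays psi_pos psi_le1 v_cont v_deriv dv_cont ode beta_pos by auto
  have "AE t in lborel. t \<notin> Bad"
    by (rule AE_not_in[OF countable_imp_null_set_lborel[OF Bad_countable]])
  then show ?thesis by (rule eventually_mono) (use main_ineq beta_cond in blast)
qed

end
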